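(* Let $\mathcal L$ be a lattice in $\mathbb R^2$ and $n\ge2$ an integer. Then there is a convex curve $\mathcal C$ of length $L$ that contains exactly $n$ points of $\mathcal L$, such that, with $$R_1=\min_{P\in\mathcal C}\rho(P),\qquad R_2=\max_{P\in\mathcal C}\rho(P),$$ the inequalities $$\frac{L}{(A_{\mathcal L}R_1)^{1/3}}\le\left(\frac{\tau(\mathcal C)R_2}{A_{\mathcal L}R_1}\right)^{1/3}L^{2/3}\le\frac{\tau(\mathcal C)R_2}{(A_{\mathcal L}R_1)^{1/3}}<n+2$$ hold, where $\tau(\mathcal C)=\int_{\mathcal C}\kappa\,ds$.
   Context: A lattice is a set $\mathcal L=\mathcal L(v_0,v_1,v_2)=\{v_0+mv_1+nv_2: m,n\in\mathbb Z\}$ where $v_0,v_1,v_2\in\mathbb R^2$ and $v_1,v_2$ are linearly independent. Its invariant is $A_{\mathcal L}=|\det(v_1,v_2)|$. All curves are of class $C^2$ with nonvanishing first and second derivative vectors, oriented so that the curvature $\kappa$ is positive; a convex curve is such a curve. The radius of curvature is $\rho=1/\kappa$, $s$ is arclength, and $\tau(\mathcal C)=\int_{\mathcal C}\kappa\,ds$ is the total curvature. *)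

theory Defs
  imports "HOL-Analysis.Analysis"
begin

definition det2 :: "real^2 \<Rightarrow> real^2 \<Rightarrow> real" where
  "det2 u v = u$1 * v$2 - u$2 * v$1"

definition lattice :: "real^2 \<Rightarrow> real^2 \<Rightarrow> real^2 \<Rightarrow> (real^2) set" where
  "lattice v0 v1 v2 = {v0 + of_int m *\<^sub>R v1 + of_int n *\<^sub>R v2 | m n. True}"

definition lattice_invariant :: "real^2 \<Rightarrow> real^2 \<Rightarrow> real" where
  "lattice_invariant v1 v2 = \<bar>det2 v1 v2\<bar>"

definition d1 :: "(real \<Rightarrow> real^2) \<Rightarrow> real \<Rightarrow> real \<Rightarrow> real \<Rightarrow> real^2" where
  "d1 \<gamma> a b t = vector_derivative \<gamma> (at t within {a..b})"

definition d2 :: "(real \<Rightarrow> real^2) \<Rightarrow> real \<Rightarrow> real \<Rightarrow> real \<Rightarrow> real^2" where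
  "d2 \<gamma> a b t = vector_derivative (d1 \<gamma> a b) (at t within {a..b})"

definition curvature :: "(real \<Rightarrow> real^2) \<Rightarrow> real \<Rightarrow> real \<Rightarrow> real \<Rightarrow> real" where
  "curvature \<gamma> a b t = det2 (d1 \<gamma> a b t) (d2 \<gamma> a b t) / norm (d1 \<gamma> a b t) ^ 3"

definition radius_curv :: "(real \<Rightarrow> real^2) \<Rightarrow> real \<Rightarrow> real \<Rightarrow> real \<Rightarrow> real" where
  "radius_curv \<gamma> a b t = 1 / curvature \<gamma> a b t"

definition convex_curve :: "(real \<Rightarrow> real^2) \<Rightarrow> real \<Rightarrow> real \<Rightarrow> bool" where
  "convex_curve \<gamma> a b \<longleftrightarrow> a < b \<and> inj_on \<gamma> {a..b} \<and>
     (\<forall>t\<in>{a..b}. (\<gamma> has_vector_derivative d1 \<gamma> a b t) (at t within {a..b}) \<and>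
                  (d1 \<gamma> a b has_vector_derivative d2 \<gamma> a b t) (at t within {a..b}) \<and>
                  d1 \<gamma> a b t \<noteq> 0 \<and> d2 \<gamma> a b t \<noteq> 0 \<and> curvature \<gamma> a b t > 0) \<and>
     continuous_on {a..b} (d2 \<gamma> a b)"

definition curve_length :: "(real \<Rightarrow> real^2) \<Rightarrow> real \<Rightarrow> real \<Rightarrow> real" where
  "curve_length \<gamma> a b = integral {a..b} (\<lambda>t. norm (d1 \<gamma> a b t))"

definition total_curvature :: "(real \<Rightarrow> real^2) \<Rightarrow> real \<Rightarrow> real \<Rightarrow> real" where
  "total_curvature \<gamma> a b = integral {a..b} (\<lambda>t. curvature \<gamma> a b t * norm (d1 \<gamma> a b t))"

end

theory Submission
  imports Defs
begin


lemma indep2: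
  fixes p q :: "real^2"
  assumes "det2 q p \<noteq> 0" "\<alpha> *\<^sub>R p + \<beta> *\<^sub>R q = 0"
  shows "\<alpha> = 0 \<and> \<beta> = 0"
proof -
  have e1: "\<alpha> * p$1 + \<beta> * q$1 = 0" using arg_cong[OF assms(2), of "\<lambda>v. v$1"] by simp
  have e2: "\<alpha> * p$2 + \<beta> * q$2 = 0" using arg_cong[OF assms(2), of "\<lambda>v. v$2"] by simp
  have "\<alpha> * det2 q p = 0"
    using e1 e2 unfolding det2_def by algebra
  moreover have "\<beta> * det2 q p = 0"
    using e1 e2 unfolding det2_def by algebra
  ultimately show ?thesis using assms(1) by simp
qed

lemma det_nz:
  fixes v1 v2 :: "real^2"
  assumes "independent {v1, v2}" "v1 \<noteq> v2"
  shows "det2 v1 v2 \<noteq> 0"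
proof
  assume d: "det2 v1 v2 = 0"
  have z1: "(v2$2) *\<^sub>R v1 - (v1$2) *\<^sub>R v2 = 0"
    using d by (simp add: vec_eq_iff forall_2 det2_def algebra_simps)
  have z2: "(v2$1) *\<^sub>R v1 - (v1$1) *\<^sub>R v2 = 0"
    using d by (simp add: vec_eq_iff forall_2 det2_def algebra_simps)
  have nd: "\<not> (\<exists>c. c \<noteq> 0 \<and> (c *\<^sub>R v1 \<in> span {v2}))"
  proof
    assume "\<exists>c. c \<noteq> 0 \<and> c *\<^sub>R v1 \<in> span {v2}"
    then obtain c where c: "c \<noteq> 0" "c *\<^sub>R v1 \<in> span {v2}" by blast
    then have "v1 \<in> span {v2}" using span_mul[OF c(2), of "inverse c"] by simp
    then have "dependent {v1, v2}" using assms(2)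
      by (metis dependent_def insert_Diff_single insert_absorb2 insert_commute insertI1 singleton_insert_inj_eq' Diff_insert_absorb empty_iff insert_iff)
    then show False using assms(1) by simp
  qed
  have nd2: "\<not> (\<exists>c. c \<noteq> 0 \<and> (c *\<^sub>R v2 \<in> span {v1}))"
  proof
    assume "\<exists>c. c \<noteq> 0 \<and> c *\<^sub>R v2 \<in> span {v1}"
    then obtain c where c: "c \<noteq> 0" "c *\<^sub>R v2 \<in> span {v1}" by blast
    then have "v2 \<in> span {v1}" using span_mul[OF c(2), of "inverse c"] by simp
    then have "dependent {v1, v2}" using assms(2)
      by (metis dependent_def insert_Diff_single insert_absorb2 insert_commute insertI1 singleton_insert_inj_eq' Diff_insert_absorb empty_iff insert_iff)
    then show False using assms(1) by simp
  qed
  have s1: "(v2$2) *\<^sub>R v1 \<in> span {v2}" using z1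
    by (metis eq_iff_diff_eq_0 span_base span_mul insertI1)
  have s2: "(v2$1) *\<^sub>R v1 \<in> span {v2}" using z2
    by (metis eq_iff_diff_eq_0 span_base span_mul insertI1)
  have s3: "(v1$2) *\<^sub>R v2 \<in> span {v1}" using z1
    by (metis eq_iff_diff_eq_0 span_base span_mul insertI1)
  have s4: "(v1$1) *\<^sub>R v2 \<in> span {v1}" using z2
    by (metis eq_iff_diff_eq_0 span_base span_mul insertI1)
  have "v2$2 = 0" "v2$1 = 0" "v1$2 = 0" "v1$1 = 0"
    using nd nd2 s1 s2 s3 s4 by blast+
  then have "v1 = 0" "v2 = 0" by (simp_all add: vec_eq_iff forall_2)
  then show False using assms(2) by simp
qed

lemma deriv1: "((\<lambda>t::real. v0 + (t*(t-1)/2) *\<^sub>R p + t *\<^sub>R (q::real^2)) has_vector_derivative ((t - 1/2) *\<^sub>R p + q)) (at t)"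
proof -
  have h1: "((\<lambda>t::real. t*(t-1)/2) has_real_derivative (t - 1/2)) (at t)"
    by (rule derivative_eq_intros refl | simp add: field_simps)+
  have h2: "((\<lambda>t::real. t) has_real_derivative 1) (at t)" by (rule DERIV_ident)
  have a1: "((\<lambda>t. (t*(t-1)/2) *\<^sub>R p) has_vector_derivative ((t*(t-1)/2) *\<^sub>R 0 + (t-1/2) *\<^sub>R p)) (at t)"
    by (rule has_vector_derivative_scaleR[OF h1 has_vector_derivative_const])
  have a2: "((\<lambda>t. t *\<^sub>R q) has_vector_derivative (t *\<^sub>R 0 + 1 *\<^sub>R q)) (at t)"
    by (rule has_vector_derivative_scaleR[OF h2 has_vector_derivative_const])
  have "((\<lambda>t. v0 + (t*(t-1)/2) *\<^sub>R p + t *\<^sub>R q) has_vector_derivative (0 + ((t*(t-1)/2) *\<^sub>R 0 + (t-1/2) *\<^sub>R p) + (t *\<^sub>R 0 + 1 *\<^sub>R q))) (at t)"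
    by (intro has_vector_derivative_add a1 a2 has_vector_derivative_const)
  then show ?thesis by simp
qed

lemma deriv2: "((\<lambda>t::real. (t - 1/2) *\<^sub>R p + (q::real^2)) has_vector_derivative p) (at t)"
proof -
  have h1: "((\<lambda>t::real. t - 1/2) has_real_derivative 1) (at t)"
    by (rule derivative_eq_intros refl | simp)+
  have "((\<lambda>t. (t - 1/2) *\<^sub>R p + q) has_vector_derivative ((t - 1/2) *\<^sub>R 0 + 1 *\<^sub>R p) + 0) (at t)"
    by (intro has_vector_derivative_add has_vector_derivative_scaleR[OF h1 has_vector_derivative_const] has_vector_derivative_const)
  then show ?thesis by simp
qed

lemma det_shift: "det2 ((t - 1/2) *\<^sub>R p + q) p = det2 q p"
  unfolding det2_def by (simp add: algebra_simps)

lemma gam_diff: "(v0 + (s*(s-1)/2) *\<^sub>R p + s *\<^sub>R (q::real^2)) - (v0 + (t*(t-1)/2) *\<^sub>R p + t *\<^sub>R q) = (s*(s-1)/2 - t*(t-1)/2) *\<^sub>R p + (s - t) *\<^sub>R q"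
  by (simp add: scaleR_diff_left)

lemma K_bound: fixes N P Q K :: real assumes N2: "N \<ge> 2" and P0: "P > 0" and Q0: "Q \<ge> 0" and K_def: "K = 3*N*(N*P+Q) + (3*N+1)*(P/2+Q) + 1"
  shows "K > P/2 + Q"
proof -
  have h1: "0 \<le> 3*N*(N*P+Q)" using N2 P0 Q0 by simp
  have h2: "0 \<le> 3*N*(P/2+Q)" using N2 P0 Q0 by simp
  have "K = 3*N*(N*P+Q) + 3*N*(P/2+Q) + (P/2+Q) + 1" unfolding K_def by (simp add: algebra_simps)
  then show ?thesis using h1 h2 by linarith
qed



lemma ineqs:
  fixes L Z Y c :: real
  assumes L: "0 < L" and LZ: "L \<le> Z" and Y: "0 < Y" and c: "Z / Y powr (1/3) < c"
  shows "L / Y powr (1/3) \<le> (Z / Y) powr (1/3) * L powr (2/3) \<and>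
         (Z / Y) powr (1/3) * L powr (2/3) \<le> Z / Y powr (1/3) \<and>
         Z / Y powr (1/3) < c"
proof -
  have Z: "0 < Z" using L LZ by simp
  have Lsp: "L = L powr (1/3) * L powr (2/3)" using L by (simp add: powr_add[symmetric])
  have Zsp: "Z = Z powr (1/3) * Z powr (2/3)" using Z by (simp add: powr_add[symmetric])
  have q: "(Z / Y) powr (1/3) = Z powr (1/3) / Y powr (1/3)" using Z Y by (simp add: powr_divide)
  have m1: "L powr (1/3) \<le> Z powr (1/3)" using L LZ by (simp add: powr_mono2)
  have m2: "L powr (2/3) \<le> Z powr (2/3)" using L LZ by (simp add: powr_mono2)
  have Yp: "0 < Y powr (1/3)" using Y by simp
  have "L / Y powr (1/3) = L powr (1/3) * L powr (2/3) / Y powr (1/3)" using Lsp by simp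
  also have "\<dots> \<le> Z powr (1/3) * L powr (2/3) / Y powr (1/3)"
    using m1 Yp by (intro divide_right_mono mult_right_mono) auto
  also have "\<dots> = (Z / Y) powr (1/3) * L powr (2/3)" using q by simp
  finally have i1: "L / Y powr (1/3) \<le> (Z / Y) powr (1/3) * L powr (2/3)" .
  have "(Z / Y) powr (1/3) * L powr (2/3) = Z powr (1/3) * L powr (2/3) / Y powr (1/3)" using q by simp
  also have "\<dots> \<le> Z powr (1/3) * Z powr (2/3) / Y powr (1/3)"
    using m2 Yp by (intro divide_right_mono mult_left_mono) auto
  also have "\<dots> = Z / Y powr (1/3)" using Zsp by simp
  finally show ?thesis using i1 c by simp
qed

lemma poly_ineq:
  fixes N m M :: real
  assumes N: "N \<ge> 2" and m: "m > 0" and MM: "3 * N * M \<le> (3 * N + 1) * m" and M0: "0 \<le> M"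
  shows "(N - 1) * M ^ 3 < (N + 2) * m ^ 3"
proof -
  have "M \<le> ((3*N+1)/(3*N)) * m" using MM N by (simp add: field_simps)
  then have "M^3 \<le> (((3*N+1)/(3*N)) * m)^3" using M0 by (intro power_mono) auto
  then have "(N-1) * M^3 \<le> (N-1) * (((3*N+1)/(3*N)) * m)^3" using N by (intro mult_left_mono) auto
  also have "\<dots> = ((N-1)*(3*N+1)^3 / (27*N^3)) * m^3"
  proof -
    have "(3*N)^3 = 27*N^3" by (simp add: power_mult_distrib)
    then show ?thesis by (simp add: power_mult_distrib power_divide)
  qed
  also have "\<dots> < (N+2) * m^3"
  proof -
    have "(N-1)*(3*N+1)^3 < (N+2) * (27*N^3)"
    proof -
      have "(N+2) * (27*N^3) - (N-1)*(3*N+1)^3 = 54*N^3+18*N^2+8*N+1"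
        by (simp add: algebra_simps power2_eq_square power3_eq_cube)
      moreover have "54*N^3+18*N^2+8*N+1 > 0" using N by (simp add: add_pos_nonneg)
      ultimately show ?thesis by simp
    qed
    then have "(N-1)*(3*N+1)^3 / (27*N^3) < N+2" using N by (simp add: field_simps)
    then show ?thesis using m by (intro mult_strict_right_mono) auto
  qed
  finally show ?thesis .
qed



lemma main_curve:
  fixes v0 p q :: "real^2" and n :: nat
  assumes D: "det2 q p > 0" and n: "n \<ge> 2"
  shows "\<exists>\<gamma> a b. convex_curve \<gamma> a b \<and>
           card (\<gamma> ` {a..b} \<inter> lattice v0 p q) = n \<and>
           (let L = curve_length \<gamma> a b; \<tau> = total_curvature \<gamma> a b;
                A = det2 q p;
                R1 = Inf (radius_curv \<gamma> a b ` {a..b});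
                R2 = Sup (radius_curv \<gamma> a b ` {a..b})
            in L / (A * R1) powr (1/3) \<le> (\<tau> * R2 / (A * R1)) powr (1/3) * L powr (2/3) \<and>
               (\<tau> * R2 / (A * R1)) powr (1/3) * L powr (2/3) \<le> \<tau> * R2 / (A * R1) powr (1/3) \<and>
               \<tau> * R2 / (A * R1) powr (1/3) < real n + 2)"
proof -
  define A where "A = det2 q p"
  define N where "N = real n"
  define P where "P = norm p"
  define Q where "Q = norm q"
  have A0: "A > 0" using D A_def by simp
  have pnz: "p \<noteq> 0" using D by (auto simp: det2_def)
  have P0: "P > 0" using pnz P_def by simp
  have Q0: "Q \<ge> 0" using Q_def by simp
  have N2: "N \<ge> 2" using n N_def by simp
  define K where "K = 3*N*(N*P+Q) + (3*N+1)*(P/2+Q) + 1"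
  have K0: "K > P/2 + Q" using K_bound[OF N2 P0 Q0 K_def] .
  obtain T :: nat where T: "K / P < real T" using reals_Archimedean2 by blast
  have TP: "K < real T * P" using T P0 by (simp add: field_simps)
  have T1: "real T \<ge> 1"
  proof (rule ccontr)
    assume "\<not> real T \<ge> 1"
    then have "T = 0" by simp
    then show False using TP K0 P0 Q0 by simp
  qed
  define a where "a = real T"
  define b where "b = real T + N - 1"
  define \<gamma> where "\<gamma> = (\<lambda>t::real. v0 + (t*(t-1)/2) *\<^sub>R p + t *\<^sub>R q)"
  define g where "g = (\<lambda>t::real. (t - 1/2) *\<^sub>R p + q)"
  define m where "m = real T * P - P/2 - Q"
  define M where "M = real T * P + N*P + Q"
  have ab: "a < b" using N2 a_def b_def by simp
  have bma: "b - a = N - 1" using a_def b_def by simp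
  have m0: "m > 0" using TP K0 m_def by simp
  have MM: "3*N*M \<le> (3*N+1)*m"
  proof -
    have "(3*N+1)*m - 3*N*M = real T * P - 3*N*(N*P+Q) - (3*N+1)*(P/2+Q)"
      unfolding m_def M_def by (simp add: algebra_simps)
    then show ?thesis using TP K_def by simp
  qed
  have M0: "M \<ge> 0" using T1 P0 Q0 N2 unfolding M_def by simp
  have gbnd: "m \<le> norm (g t) \<and> norm (g t) \<le> M" if t: "t \<in> {a..b}" for t
  proof -
    have t1: "t - 1/2 \<ge> real T - 1/2" "t - 1/2 \<le> real T + N" "t - 1/2 > 0"
      using t T1 a_def b_def by auto
    have nt: "norm ((t - 1/2) *\<^sub>R p) = (t - 1/2) * P" using t1 P_def by simp
    have lo: "norm (g t) \<ge> (t - 1/2) * P - Q"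
      using norm_triangle_ineq2[of "(t - 1/2) *\<^sub>R p" "- q"] nt Q_def g_def
      by (simp add: norm_minus_commute)
    have hi: "norm (g t) \<le> (t - 1/2) * P + Q"
      using norm_triangle_ineq[of "(t - 1/2) *\<^sub>R p" q] nt Q_def g_def by simp
    have "(real T - 1/2) * P \<le> (t - 1/2) * P" using t1 P0 by (intro mult_right_mono) auto
    moreover have "(t - 1/2) * P \<le> (real T + N) * P" using t1 P0 by (intro mult_right_mono) auto
    ultimately show ?thesis using lo hi m_def M_def by (simp add: algebra_simps)
  qed
  have gpos: "norm (g t) > 0" if "t \<in> {a..b}" for t using gbnd[OF that] m0 by linarith
  have dg: "(\<gamma> has_vector_derivative g t) (at t)" for t
    unfolding \<gamma>_def g_def by (rule deriv1)
  have dgg: "(g has_vector_derivative p) (at t)" for t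
    unfolding g_def by (rule deriv2)
  have d1e: "d1 \<gamma> a b t = g t" if "t \<in> {a..b}" for t
    unfolding d1_def using ab that has_vector_derivative_at_within[OF dg]
    by (intro vector_derivative_within_closed_interval) auto
  have d1d: "(d1 \<gamma> a b has_vector_derivative p) (at t within {a..b})" if "t \<in> {a..b}" for t
    using has_vector_derivative_transform[OF that, of "d1 \<gamma> a b" g p] d1e has_vector_derivative_at_within[OF dgg]
    by auto
  have d2e: "d2 \<gamma> a b t = p" if "t \<in> {a..b}" for t
    unfolding d2_def using ab that d1d
    by (intro vector_derivative_within_closed_interval) auto
  have curv: "curvature \<gamma> a b t = A / norm (g t) ^ 3" if "t \<in> {a..b}" for t
  proof -
    have "det2 (g t) p = A" unfolding A_def g_def by (rule det_shift)
    then show ?thesis unfolding curvature_def using d1e[OF that] d2e[OF that] by simp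
  qed
  have rad: "radius_curv \<gamma> a b t = norm (g t) ^ 3 / A" if "t \<in> {a..b}" for t
    unfolding radius_curv_def using curv[OF that] by simp
  have inj: "inj_on \<gamma> {a..b}"
  proof (rule inj_onI)
    fix s t assume "\<gamma> s = \<gamma> t"
    have "\<gamma> s - \<gamma> t = (s*(s-1)/2 - t*(t-1)/2) *\<^sub>R p + (s - t) *\<^sub>R q"
      unfolding \<gamma>_def by (rule gam_diff)
    then have eq: "(s*(s-1)/2 - t*(t-1)/2) *\<^sub>R p + (s - t) *\<^sub>R q = 0"
      using \<open>\<gamma> s = \<gamma> t\<close> by simp
    have "s - t = 0" using indep2[OF _ eq] D by force
    then show "s = t" by simp
  qed
  have cc: "convex_curve \<gamma> a b"
    unfolding convex_curve_def
  proof (intro conjI ballI)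
    show "a < b" by fact
    show "inj_on \<gamma> {a..b}" by fact
    fix t assume t: "t \<in> {a..b}"
    show "(\<gamma> has_vector_derivative d1 \<gamma> a b t) (at t within {a..b})"
      using d1e[OF t] has_vector_derivative_at_within[OF dg] by auto
    show "(d1 \<gamma> a b has_vector_derivative d2 \<gamma> a b t) (at t within {a..b})"
      using d1d[OF t] d2e[OF t] by simp
    show "d1 \<gamma> a b t \<noteq> 0" using d1e[OF t] gpos[OF t] by auto
    show "d2 \<gamma> a b t \<noteq> 0" using d2e[OF t] pnz by simp
    show "curvature \<gamma> a b t > 0" using curv[OF t] gpos[OF t] A0 by simp
  next
    show "continuous_on {a..b} (d2 \<gamma> a b)"
      using continuous_on_cong[of "{a..b}" "{a..b}" "d2 \<gamma> a b" "\<lambda>_. p"] d2e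
      by (simp add: continuous_on_const)
  qed

  have latt: "\<gamma> ` {a..b} \<inter> lattice v0 p q = (\<lambda>i. \<gamma> (real i)) ` {T..<T+n}"
  proof
    show "\<gamma> ` {a..b} \<inter> lattice v0 p q \<subseteq> (\<lambda>i. \<gamma> (real i)) ` {T..<T+n}"
    proof
      fix x assume x: "x \<in> \<gamma> ` {a..b} \<inter> lattice v0 p q"
      then obtain t where t: "t \<in> {a..b}" "x = \<gamma> t" by blast
      from x obtain m' k :: int where mk: "x = v0 + of_int m' *\<^sub>R p + of_int k *\<^sub>R q"
        unfolding lattice_def by blast
      have "\<gamma> t - (v0 + of_int m' *\<^sub>R p + of_int k *\<^sub>R q) = (t*(t-1)/2 - of_int m') *\<^sub>R p + (t - of_int k) *\<^sub>R q"
        unfolding \<gamma>_def by (simp add: scaleR_diff_left)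
      then have eq: "(t*(t-1)/2 - of_int m') *\<^sub>R p + (t - of_int k) *\<^sub>R q = 0"
        using t mk by simp
      have "t - of_int k = 0" using indep2[OF _ eq] D by force
      then have tk: "t = of_int k" by simp
      have k1: "k \<ge> int T" using t(1) tk a_def by auto
      have k2: "real_of_int k < real T + N" using t(1) tk b_def by auto
      define i where "i = nat k"
      have ti: "t = real i" using tk k1 i_def by simp
      have "i \<in> {T..<T+n}" using k1 k2 i_def N_def by auto
      then show "x \<in> (\<lambda>i. \<gamma> (real i)) ` {T..<T+n}" using t(2) ti by blast
    qed
  next
    show "(\<lambda>i. \<gamma> (real i)) ` {T..<T+n} \<subseteq> \<gamma> ` {a..b} \<inter> lattice v0 p q"
    proof
      fix x assume "x \<in> (\<lambda>i. \<gamma> (real i)) ` {T..<T+n}"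
      then obtain i where i: "i \<in> {T..<T+n}" "x = \<gamma> (real i)" by blast
      have ia: "real i \<in> {a..b}" using i(1) a_def b_def N_def n by auto
      have ev: "(2::int) dvd (int i * (int i - 1))" by simp
      have e2: "real_of_int ((int i * (int i - 1)) div 2) = real i * (real i - 1) / 2"
        using real_of_int_div[OF ev] by simp
      have "x = v0 + of_int ((int i * (int i - 1)) div 2) *\<^sub>R p + of_int (int i) *\<^sub>R q"
        using i(2) e2 unfolding \<gamma>_def by simp
      then have "x \<in> lattice v0 p q" unfolding lattice_def by blast
      then show "x \<in> \<gamma> ` {a..b} \<inter> lattice v0 p q" using ia i(2) by blast
    qed
  qed
  have injn: "inj_on (\<lambda>i. \<gamma> (real i)) {T..<T+n}"
  proof (rule inj_onI)
    fix i j assume ij: "i \<in> {T..<T+n}" "j \<in> {T..<T+n}" "\<gamma> (real i) = \<gamma> (real j)"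
    have "real i \<in> {a..b}" "real j \<in> {a..b}" using ij a_def b_def N_def n by auto
    then have "real i = real j" using inj_onD[OF inj ij(3)] by blast
    then show "i = j" by simp
  qed
  have card: "card (\<gamma> ` {a..b} \<inter> lattice v0 p q) = n"
    using latt card_image[OF injn] by simp
  have contg: "continuous_on {a..b} g" unfolding g_def by (intro continuous_intros)
  have Lr: "curve_length \<gamma> a b = integral {a..b} (\<lambda>t. norm (g t))"
    unfolding curve_length_def by (rule integral_cong) (simp add: d1e)
  have Tr: "total_curvature \<gamma> a b = integral {a..b} (\<lambda>t. A / norm (g t) ^ 2)"
    unfolding total_curvature_def
  proof (rule integral_cong)
    fix t assume t: "t \<in> {a..b}"
    have "norm (g t) > 0" using gpos[OF t] .
    then show "curvature \<gamma> a b t * norm (d1 \<gamma> a b t) = A / norm (g t) ^ 2"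
      using curv[OF t] d1e[OF t] by (simp add: power2_eq_square power3_eq_cube field_simps)
  qed
  have int1: "(\<lambda>t. norm (g t)) integrable_on {a..b}"
    by (intro integrable_continuous_interval continuous_on_norm contg)
  have int2: "(\<lambda>t. A / norm (g t) ^ 2) integrable_on {a..b}"
    using gpos by (intro integrable_continuous_interval continuous_intros contg) auto
  define L where "L = curve_length \<gamma> a b"
  define \<tau> where "\<tau> = total_curvature \<gamma> a b"
  define R1 where "R1 = Inf (radius_curv \<gamma> a b ` {a..b})"
  define R2 where "R2 = Sup (radius_curv \<gamma> a b ` {a..b})"
  have Lpos: "L > 0"
  proof -
    have "integral {a..b} (\<lambda>_. m) \<le> integral {a..b} (\<lambda>t. norm (g t))"
      using gbnd by (intro integral_le int1) auto
    moreover have "integral {a..b} (\<lambda>_. m) = (b - a) * m" using ab by simp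
    moreover have "(b - a) * m > 0" using ab m0 by simp
    ultimately show ?thesis using Lr L_def ab by (simp split: if_splits)
  qed
  have taub: "\<tau> \<le> (b - a) * (A / m^2)"
  proof -
    have "integral {a..b} (\<lambda>t. A / norm (g t) ^ 2) \<le> integral {a..b} (\<lambda>_. A / m^2)"
    proof (intro integral_le int2)
      show "(\<lambda>_. A / m^2) integrable_on {a..b}" by (intro integrable_continuous_interval continuous_on_const)
      fix t assume t: "t \<in> {a..b}"
      have "m^2 \<le> norm (g t) ^ 2" using gbnd[OF t] m0 by (intro power_mono) auto
      then show "A / norm (g t) ^ 2 \<le> A / m^2" using A0 m0 gpos[OF t] by (intro divide_left_mono) auto
    qed
    moreover have "integral {a..b} (\<lambda>_. A / m^2) = (b - a) * (A / m^2)" using ab by simp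
    ultimately show ?thesis using Tr \<tau>_def ab by (simp split: if_splits)
  qed
  have tau0: "\<tau> \<ge> 0"
    unfolding \<tau>_def Tr using A0 by (intro integral_nonneg int2) auto
  have radb: "m^3 / A \<le> radius_curv \<gamma> a b t \<and> radius_curv \<gamma> a b t \<le> M^3 / A" if t: "t \<in> {a..b}" for t
  proof -
    have "m^3 \<le> norm (g t)^3" "norm (g t)^3 \<le> M^3" using gbnd[OF t] m0 by (intro power_mono; auto)+
    then show ?thesis using rad[OF t] A0 by (simp add: divide_right_mono)
  qed
  have ne: "radius_curv \<gamma> a b ` {a..b} \<noteq> {}" using ab by simp
  have bdd: "bdd_above (radius_curv \<gamma> a b ` {a..b})"
    using radb by (intro bdd_aboveI[of _ "M^3/A"]) auto
  have R1b: "m^3 / A \<le> R1" unfolding R1_def using radb ne by (intro cInf_greatest) auto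
  have R2b: "R2 \<le> M^3 / A" unfolding R2_def using radb ne by (intro cSup_least) auto
  have R2u: "radius_curv \<gamma> a b t \<le> R2" if "t \<in> {a..b}" for t
    unfolding R2_def using bdd that by (intro cSup_upper) auto
  have R2pos: "R2 > 0"
  proof -
    have "a \<in> {a..b}" using ab by simp
    then have "radius_curv \<gamma> a b a > 0" using rad[of a] gpos[of a] A0 by simp
    then show ?thesis using R2u[of a] ab by simp
  qed
  have LZ: "L \<le> \<tau> * R2"
  proof -
    have e: "integral {a..b} (\<lambda>t. R2 *\<^sub>R (A / norm (g t) ^ 2)) = R2 *\<^sub>R integral {a..b} (\<lambda>t. A / norm (g t) ^ 2)"
      by (rule integral_cmul)
    have "\<tau> * R2 = integral {a..b} (\<lambda>t. R2 *\<^sub>R (A / norm (g t) ^ 2))"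
      unfolding e \<tau>_def Tr by simp
    moreover have "integral {a..b} (\<lambda>t. norm (g t)) \<le> integral {a..b} (\<lambda>t. R2 *\<^sub>R (A / norm (g t) ^ 2))"
    proof (intro integral_le int1)
      show "(\<lambda>t. R2 *\<^sub>R (A / norm (g t) ^ 2)) integrable_on {a..b}"
        using int2 by (rule integrable_cmul)
      fix t assume t: "t \<in> {a..b}"
      have x0: "norm (g t) > 0" using gpos[OF t] .
      have r: "norm (g t) ^ 3 / A \<le> R2" using R2u[OF t] rad[OF t] by simp
      have "norm (g t) = (norm (g t) ^ 3 / A) * (A / norm (g t) ^ 2)"
        using x0 A0 by (simp add: power2_eq_square power3_eq_cube field_simps)
      also have "\<dots> \<le> R2 * (A / norm (g t) ^ 2)"
        using r x0 A0 by (intro mult_right_mono) auto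
      finally show "norm (g t) \<le> R2 *\<^sub>R (A / norm (g t) ^ 2)" by simp
    qed
    ultimately show ?thesis using Lr L_def by simp
  qed
  have Y: "A * R1 \<ge> m^3"
  proof -
    have "A * (m^3 / A) \<le> A * R1" using R1b A0 by (intro mult_left_mono) auto
    then show ?thesis using A0 by simp
  qed
  have Y0: "A * R1 > 0" using Y m0 by (smt (verit) zero_less_power)
  have Ym: "m \<le> (A * R1) powr (1/3)"
  proof -
    have "(m^3) powr (1/3) = (m powr 3) powr (1/3)" using powr_numeral[of m "num.Bit1 num.One"] m0 by simp
    also have "\<dots> = m powr (3 * (1/3))" by (rule powr_powr)
    also have "\<dots> = m" using m0 by simp
    finally have "(m^3) powr (1/3) = m" .
    moreover have "(m^3) powr (1/3) \<le> (A * R1) powr (1/3)" using Y m0 by (intro powr_mono2) auto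
    ultimately show ?thesis by simp
  qed
  have Zb: "\<tau> * R2 \<le> (N - 1) * M^3 / m^2"
  proof -
    have "\<tau> * R2 \<le> ((b - a) * (A / m^2)) * (M^3 / A)"
      using taub R2b tau0 R2pos by (intro mult_mono) auto
    moreover have "((b - a) * (A / m^2)) * (M^3 / A) = (N - 1) * M^3 / m^2"
      using A0 unfolding bma by simp
    ultimately show ?thesis by simp
  qed
  have fin: "\<tau> * R2 / (A * R1) powr (1/3) < real n + 2"
  proof -
    have "\<tau> * R2 / (A * R1) powr (1/3) \<le> \<tau> * R2 / m"
      using Ym m0 tau0 R2pos Y0 by (intro divide_left_mono mult_pos_pos) auto
    also have "\<dots> \<le> ((N - 1) * M^3 / m^2) / m" using Zb m0 by (intro divide_right_mono) auto
    also have "\<dots> = (N - 1) * M^3 / m^3" by (simp add: power2_eq_square power3_eq_cube)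
    also have "\<dots> < N + 2"
      using poly_ineq[OF N2 m0 MM M0] m0 by (simp add: field_simps)
    finally show ?thesis using N_def by simp
  qed
  have all: "L / (A * R1) powr (1/3) \<le> (\<tau> * R2 / (A * R1)) powr (1/3) * L powr (2/3) \<and>
         (\<tau> * R2 / (A * R1)) powr (1/3) * L powr (2/3) \<le> \<tau> * R2 / (A * R1) powr (1/3) \<and>
         \<tau> * R2 / (A * R1) powr (1/3) < real n + 2"
    by (rule ineqs[OF Lpos LZ Y0 fin])
  show ?thesis
    by (rule exI[of _ \<gamma>], rule exI[of _ a], rule exI[of _ b])
       (use cc card all in \<open>simp add: Let_def L_def \<tau>_def R1_def R2_def A_def\<close>)
qed


lemma lattice_swap: "lattice v0 v2 v1 = lattice v0 v1 v2"
proof -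
  have "\<And>x. (\<exists>m n. x = v0 + of_int m *\<^sub>R v2 + of_int n *\<^sub>R v1) \<longleftrightarrow> (\<exists>m n. x = v0 + of_int m *\<^sub>R v1 + of_int n *\<^sub>R v2)"
    by (metis (no_types, lifting) add.assoc add.commute)
  then show ?thesis unfolding lattice_def by simp
qed

theorem theorem8p1:
  fixes v0 v1 v2 :: "real^2" and n :: nat
  assumes "independent {v1, v2}" and "v1 \<noteq> v2" and "n \<ge> 2"
  shows "\<exists>\<gamma> a b. convex_curve \<gamma> a b \<and>
           card (\<gamma> ` {a..b} \<inter> lattice v0 v1 v2) = n \<and>
           (let L = curve_length \<gamma> a b; \<tau> = total_curvature \<gamma> a b;
                A = lattice_invariant v1 v2;
                R1 = Inf (radius_curv \<gamma> a b ` {a..b});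
                R2 = Sup (radius_curv \<gamma> a b ` {a..b})
            in L / (A * R1) powr (1/3) \<le> (\<tau> * R2 / (A * R1)) powr (1/3) * L powr (2/3) \<and>
               (\<tau> * R2 / (A * R1)) powr (1/3) * L powr (2/3) \<le> \<tau> * R2 / (A * R1) powr (1/3) \<and>
               \<tau> * R2 / (A * R1) powr (1/3) < real n + 2)"
proof -
  have d: "det2 v1 v2 \<noteq> 0" using det_nz assms(1,2) .
  have sw: "det2 v2 v1 = - det2 v1 v2" unfolding det2_def by simp
  show ?thesis
  proof (cases "det2 v2 v1 > 0")
    case True
    have "lattice_invariant v1 v2 = det2 v2 v1" unfolding lattice_invariant_def using True sw by simp
    then show ?thesis using main_curve[OF True assms(3), of v0] by simp
  next
    case False
    then have pos: "det2 v1 v2 > 0" using d sw by linarith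
    have "lattice_invariant v1 v2 = det2 v1 v2" unfolding lattice_invariant_def using pos by simp
    then show ?thesis using main_curve[OF pos assms(3), of v0] lattice_swap[of v0 v2 v1] by simp
  qed
qed

end
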